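(* For complex numbers $z,w$ with $|z|<1$, $|w|<\frac14$ and $w(1+z)^2\neq z$, $$P(z,w):=\sum_{n\ge0}P_n(z)w^n=\frac{C(w)-(z+1)}{w(1+z)^2-z},$$ $$Q(z,w):=\sum_{n\ge0}Q_n(z)w^n=\frac{(C(w)-(z+1))(z+1)}{w(1+z)^2-z}=P(z,w)(z+1).$$
   Context: $C_n=\frac{1}{n+1}\binom{2n}{n}$ are the Catalan numbers and $C(w)=\sum_{n\ge0}C_nw^n=\frac{1-\sqrt{1-4w}}{2w}$ for $|w|<\frac14$. The Catalan triangle numbers are $B_{n,k}=\frac{k}{n}\binom{2n}{n-k}$ ($n\ge1$, $1\le k\le n$) and $A_{n,k}=\frac{2k-1}{2n+1}\binom{2n+1}{n+1-k}$ ($n\ge0$, $1\le k\le n+1$). For $n\ge0$, $P_n(z)=\sum_{j=0}^n B_{n+1,j+1}z^j$ and $Q_n(z)=\sum_{j=0}^{n+1}A_{n+1,j+1}z^j$. *)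

theory Defs
  imports "HOL-Analysis.Analysis"
begin

definition catalan :: "nat \<Rightarrow> nat" where
  "catalan n = (2*n choose n) div (n+1)"

definition catalan_gf :: "complex \<Rightarrow> complex" where
  "catalan_gf w = (\<Sum>n. of_nat (catalan n) * w ^ n)"

definition catB :: "nat \<Rightarrow> nat \<Rightarrow> real" where
  "catB n k = real k / real n * real (2*n choose (n-k))"

definition catA :: "nat \<Rightarrow> nat \<Rightarrow> real" where
  "catA n k = (2 * real k - 1) / (2 * real n + 1) * real (2*n+1 choose (n+1-k))"

definition polyP :: "nat \<Rightarrow> complex \<Rightarrow> complex" where
  "polyP n z = (\<Sum>j=0..n. complex_of_real (catB (n+1) (j+1)) * z ^ j)"

definition polyQ :: "nat \<Rightarrow> complex \<Rightarrow> complex" where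
  "polyQ n z = (\<Sum>j=0..n+1. complex_of_real (catA (n+1) (j+1)) * z ^ j)"

end

theory Submission
  imports Defs "HOL-Complex_Analysis.Complex_Analysis"
begin
lemma binom_step: "(N choose Suc k) * Suc k = (N choose k) * (N - k)"
  by (metis binomial_absorb_comp binomial_absorption mult.commute)

lemma central_dvd: "(Suc n) dvd (2*n choose n)"
proof -
  have e: "(2*n choose Suc n) * Suc n = (2*n choose n) * n" using binom_step[of "2*n" n] by simp
  have "(2*n choose n) = Suc n * (2*n choose n) - (2*n choose Suc n) * Suc n" using e by simp
  also have "\<dots> = Suc n * ((2*n choose n) - (2*n choose Suc n))" by (simp add: algebra_simps diff_mult_distrib2)
  finally show ?thesis by (metis dvd_triv_left)
qed

lemma catalan_real: "real (catalan n) = real (2*n choose n) / real (Suc n)"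
  unfolding catalan_def using central_dvd[of n] by (simp add: real_of_nat_div)

lemma aux_nat: "(a::nat)*(n+1) = (2*n+2)*b \<Longrightarrow> b*(n+1) = (2*n+1)*c \<Longrightarrow> a*(n+1) = 2*(2*n+1)*c"
proof -
  assume h1: "a*(n+1) = (2*n+2)*b" and h2: "b*(n+1) = (2*n+1)*c"
  from h1 have "a*(n+1) = (2*b)*(n+1)" by (simp add: algebra_simps)
  hence "a = 2*b" using mult_right_cancel[of "n+1" a "2*b"] by simp
  thus ?thesis using h2 by (simp add: algebra_simps)
qed

lemma central_rec: "(2*n+2 choose Suc n) * (n+1) = 2*(2*n+1) * (2*n choose n)"
proof -
  have 1: "(Suc (2*n+1) choose Suc n) * Suc n = Suc (2*n+1) * (2*n+1 choose n)"
    using Suc_times_binomial_eq[of "2*n+1" n] by simp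
  have 2: "(Suc (2*n) choose Suc n) * Suc n = Suc (2*n) * (2*n choose n)"
    using Suc_times_binomial_eq[of "2*n" n] by simp
  have 3: "(2*n+1 choose n) = (2*n+1 choose Suc n)"
    using binomial_symmetric[of n "2*n+1"] by simp
  have 4: "Suc (2*n+1) = 2*n+2" "Suc (2*n) = 2*n+1" by simp_all
  show ?thesis apply (rule aux_nat[of _ _ "2*n+1 choose Suc n"])
    using 1 2 3 unfolding 4 by (simp_all only: Suc_eq_plus1 mult.commute)
qed

lemma aux_real: "(x::real)*(real n+2) = A \<Longrightarrow> y*(real n+1) = c \<Longrightarrow> A*(real n+1) = 2*(2*real n+1)*c \<Longrightarrow> x*(real n+2) = 2*(2*real n+1)*y"
proof -
  assume h: "x*(real n+2) = A" "y*(real n+1) = c" "A*(real n+1) = 2*(2*real n+1)*c"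
  have "(x*(real n+2))*(real n+1) = A*(real n+1)" using h(1) by simp
  also have "\<dots> = 2*(2*real n+1)*c" by (rule h(3))
  also have "\<dots> = (2*(2*real n+1)*y)*(real n+1)" unfolding h(2)[symmetric] by (simp add: algebra_simps)
  finally have "(x*(real n+2))*(real n+1) = (2*(2*real n+1)*y)*(real n+1)" .
  moreover have "(real n+1) \<noteq> 0" by linarith
  ultimately show ?thesis by simp
qed

lemma catalan_rec: "real (catalan (Suc n)) * (real n+2) = 2 * (2*real n+1) * real (catalan n)"
proof (rule aux_real)
  show "real (2*n+2 choose Suc n) * (real n+1) = 2*(2*real n+1) * real (2*n choose n)"
  proof -
    have "real ((2*n+2 choose Suc n) * (n+1)) = real (2*(2*n+1) * (2*n choose n))"
      by (simp only: central_rec)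
    thus ?thesis by (simp only: of_nat_mult of_nat_add of_nat_numeral of_nat_1)
  qed
  have b: "2*(Suc n) = 2*n+2" by simp
  show "real (catalan (Suc n)) * (real n+2) = real (2*n+2 choose Suc n)"
    unfolding catalan_real b by (simp add: field_simps del: binomial_Suc_Suc)
  show "real (catalan n) * (real n+1) = real (2*n choose n)"
    unfolding catalan_real by (simp add: field_simps del: binomial_Suc_Suc)
qed

lemma gchoose_step: "of_nat (Suc k) * (a gchoose Suc k) = (a - of_nat k) * ((a::complex) gchoose k)"
  using gbinomial_absorption[of k a] gbinomial_absorb_comp[of a k] by simp

lemma catalan_0: "catalan 0 = 1" by (simp add: catalan_def)

lemma catalan_rec_c: "of_nat (catalan (Suc n)) * (of_nat n+2) = (2 * (2* of_nat n+1) * of_nat (catalan n) :: complex)"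
proof -
  have "complex_of_real (real (catalan (Suc n)) * (real n+2)) = complex_of_real (2 * (2*real n+1) * real (catalan n))"
    using catalan_rec[of n] by simp
  thus ?thesis by simp
qed

lemma half_gchoose: "((1/2::complex) gchoose Suc n) * (-4)^(Suc n) = -2 * of_nat (catalan n)"
proof (induction n)
  case 0
  then show ?case by (simp add: catalan_0)
next
  case (Suc n)
  let ?a = "(1/2::complex)"
  have st: "of_nat (Suc (Suc n)) * (?a gchoose Suc (Suc n)) = (?a - of_nat (Suc n)) * (?a gchoose Suc n)"
    by (rule gchoose_step)
  have "(of_nat n + 2) * ((?a gchoose Suc (Suc n)) * (-4)^(Suc (Suc n)))
      = (-4) * ((of_nat (Suc (Suc n)) * (?a gchoose Suc (Suc n))) * (-4)^(Suc n))"
    unfolding of_nat_Suc power_Suc by algebra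
  also have "\<dots> = (-4) * (((?a - of_nat (Suc n)) * (?a gchoose Suc n)) * (-4)^(Suc n))"
    by (simp only: st)
  also have "\<dots> = (-4) * ((?a - of_nat (Suc n)) * ((?a gchoose Suc n) * (-4)^(Suc n)))"
    by (simp only: mult.assoc)
  also have "\<dots> = (-4) * ((?a - of_nat (Suc n)) * (-2 * of_nat (catalan n)))" by (simp only: Suc.IH)
  also have "\<dots> = -2 * (2 * (2* of_nat n+1) * of_nat (catalan n))" by (simp add: algebra_simps)
  also have "\<dots> = (of_nat n + 2) * (-2 * of_nat (catalan (Suc n)))"
    using catalan_rec_c[of n] by (simp add: algebra_simps)
  finally have fin: "(of_nat n + 2) * ((?a gchoose Suc (Suc n)) * (-4)^(Suc (Suc n))) = (of_nat n + 2) * (-2 * of_nat (catalan (Suc n)))" .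
  have "(of_nat (n+2)::complex) \<noteq> 0" by (simp only: of_nat_eq_0_iff)
  hence nz: "(of_nat n + 2::complex) \<noteq> 0" by (simp add: add.commute)
  show ?case using fin mult_left_cancel[OF nz] by blast
qed

definition Cf :: "complex fps" where "Cf = Abs_fps (\<lambda>n. of_nat (catalan n))"
definition Sf :: "complex fps" where "Sf = Abs_fps (\<lambda>n. ((1/2::complex) gchoose n) * (-4)^n)"

lemma one_gchoose: "((1::complex) gchoose n) = (if n \<le> 1 then 1 else 0)"
proof -
  have "((1::complex) gchoose n) = of_nat (1 choose n)"
    by (metis binomial_gbinomial of_nat_1)
  thus ?thesis by (cases n) (auto simp: binomial_eq_0)
qed

lemma Sf_sq: "Sf * Sf = 1 - 4 * fps_X"
proof (rule fps_ext)
  fix n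
  have "(Sf * Sf) $ n = (\<Sum>i=0..n. (((1/2::complex) gchoose i) * ((1/2) gchoose (n-i))) * (-4)^n)"
    unfolding fps_mult_nth Sf_def
    by (intro sum.cong refl) (simp add: algebra_simps power_add[symmetric])
  also have "\<dots> = ((1::complex) gchoose n) * (-4)^n"
    using gbinomial_Vandermonde[of "1/2::complex" "1/2" n] by (simp add: sum_distrib_right[symmetric])
  also have "\<dots> = (1 - 4 * fps_X) $ n"
    unfolding one_gchoose by (cases n; cases "n = 1") (auto simp: fps_numeral_nth)
  finally show "(Sf * Sf) $ n = (1 - 4 * fps_X) $ n" .
qed

lemma Sf_eq: "Sf = 1 - 2 * (fps_X * Cf)"
proof (rule fps_ext)
  fix n show "Sf $ n = (1 - 2 * (fps_X * Cf)) $ n"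
  proof (cases n)
    case 0 then show ?thesis by (simp add: Sf_def)
  next
    case (Suc m) then show ?thesis using half_gchoose[of m] by (simp add: Sf_def Cf_def)
  qed
qed

lemma Cf_quad: "fps_X * Cf^2 = Cf - 1"
proof -
  have h: "(1 - 2 * (fps_X * Cf)) * (1 - 2 * (fps_X * Cf)) = 1 - 4 * fps_X"
    using Sf_sq unfolding Sf_eq .
  have "fps_X * (4 * (fps_X * Cf^2 - Cf + 1)) = 0"
    using h by (simp add: algebra_simps power2_eq_square)
  hence h2: "4 * (fps_X * Cf^2 - Cf + 1) = 0" by simp
  have "fps_X * Cf^2 - Cf + 1 = 0"
  proof (rule fps_ext)
    fix n
    define F where "F = fps_X * Cf^2 - Cf + 1"
    have "(4 * F) $ n = 4 * F $ n" by (rule fps_mult_numeral_left)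
    moreover have "(4 * F) $ n = 0" using h2 unfolding F_def by simp
    ultimately have "F $ n = 0" by simp
    thus "(fps_X * Cf^2 - Cf + 1) $ n = 0 $ n" unfolding F_def by simp
  qed
  thus ?thesis by (simp add: algebra_simps)
qed

definition fr :: "nat \<Rightarrow> nat \<Rightarrow> real" where
  "fr r m = real r / real (2*m+r) * real (2*m+r choose m)"

definition cc :: "nat \<Rightarrow> nat \<Rightarrow> real" where
  "cc r m = (if r = 0 then (if m = 0 then 1 else 0) else fr r m)"

lemma fr_aux:
  fixes b B1 B2 m r N :: real
  assumes "B1*(m+1) = (N+1)*b" "B2*(m+1) = b*(m+r+2)" "N = 2*m+r+2" "m \<ge> 0" "r \<ge> 0"
  shows "(r+2)/N*b = (r+1)/(N+1)*B1 - r/N*B2"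
proof -
  have m1: "m+1 \<noteq> 0" using assms by linarith
  have N0: "N \<noteq> 0" "N+1 \<noteq> 0" using assms by linarith+
  have e1: "B1 = (N+1)*b/(m+1)" using assms(1) m1 by (simp add: field_simps)
  have e2: "B2 = b*(m+r+2)/(m+1)" using assms(2) m1 by (simp add: field_simps)
  have t1: "(r+1)/(N+1)*B1 = (r+1)*b/(m+1)" unfolding e1 using N0 by simp
  have t2: "r/N*B2 = r*b*(m+r+2)/(N*(m+1))" unfolding e2 by simp
  have t3a: "(r+1)*b/(m+1) = ((r+1)*N*b)/(N*(m+1))" using N0 by simp
  have t3: "(r+1)*b/(m+1) - r*b*(m+r+2)/(N*(m+1)) = ((r+1)*N*b - r*b*(m+r+2))/(N*(m+1))"
    unfolding t3a diff_divide_distrib ..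
  have t4: "(r+1)*N*b - r*b*(m+r+2) = (r+2)*(m+1)*b" using assms(3) by (simp add: algebra_simps)
  show ?thesis unfolding t1 t2 t3 t4 using m1 N0 by simp
qed

lemma fr_rec: "fr (r+2) m = fr (r+1) (m+1) - fr r (m+1)"
proof -
  define N where "N = 2*m+r+2"
  have a: "2*m+(r+2) = N" "2*(m+1)+(r+1) = N+1" "2*(m+1)+r = N" unfolding N_def by simp_all
  have h1: "(N+1 choose (m+1)) * (m+1) = (N+1) * (N choose m)"
    using Suc_times_binomial_eq[of N m] by simp
  have h2: "(N choose (m+1)) * (m+1) = (N choose m) * (m+r+2)"
    using binom_step[of N m] unfolding N_def by simp
  have h1r: "real (N+1 choose (m+1)) * (real m+1) = (real N+1) * real (N choose m)"
    using arg_cong[OF h1, of real] by (simp add: algebra_simps del: binomial_Suc_Suc)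
  have h2r: "real (N choose (m+1)) * (real m+1) = real (N choose m) * (real m+real r+2)"
    using arg_cong[OF h2, of real] by (simp add: algebra_simps del: binomial_Suc_Suc)
  have X: "(real r+2)/real N*real (N choose m) = (real r+1)/(real N+1)*real (N+1 choose (m+1)) - real r/real N*real (N choose (m+1))"
    by (rule fr_aux[OF h1r h2r]) (simp_all add: N_def)
  show ?thesis unfolding fr_def a using X by (simp add: add.commute del: binomial_Suc_Suc)
qed

lemma cc_rec: "cc (r+2) m = cc (r+1) (m+1) - cc r (m+1)"
  using fr_rec[of r m] by (simp add: cc_def fr_def)

lemma cc_one: "cc 1 m = real (catalan m)"
proof -
  have h: "Suc (2*m) * (2*m choose m) = (Suc (2*m) choose Suc m) * Suc m"
    by (rule Suc_times_binomial_eq)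
  have s: "(Suc (2*m) choose Suc m) = (Suc (2*m) choose m)"
    using binomial_symmetric[of m "Suc (2*m)"] by simp
  have h2: "(2*real m+1) * real (2*m choose m) = real (2*m+1 choose m) * (real m+1)"
    using arg_cong[OF h, of real] unfolding s by (simp add: algebra_simps del: binomial_Suc_Suc)
  have "real (2*m choose m) / (real m+1) = real (2*m+1 choose m) / (2*real m+1)"
  proof -
    have "real m + 1 \<noteq> 0" "2*real m + 1 \<noteq> 0" by linarith+
    hence eqv: "(real (2*m choose m) / (real m+1) = real (2*m+1 choose m) / (2*real m+1))
       = (real (2*m choose m) * (2*real m+1) = real (2*m+1 choose m) * (real m+1))"
      by (rule frac_eq_eq)
    have "real (2*m choose m) * (2*real m+1) = real (2*m+1 choose m) * (real m+1)"
      using h2 by (simp only: mult.commute)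
    thus ?thesis using eqv by blast
  qed
  thus ?thesis unfolding cc_def fr_def catalan_real
    by (simp del: binomial_Suc_Suc add: add.commute)
qed

lemma Cf_pow_nth: "fps_nth (Cf^r) m = complex_of_real (cc r m)"
proof (induction r arbitrary: m rule: less_induct)
  case (less r)
  consider "r = 0" | "r = 1" | k where "r = k+2"
    by (metis One_nat_def add_2_eq_Suc' not0_implies_Suc)
  then show ?case
  proof cases
    case 1 then show ?thesis by (simp add: cc_def)
  next
    case 2 then show ?thesis using cc_one[of m] by (simp add: Cf_def)
  next
    case 3
    have "fps_X * Cf^(k+2) = Cf^k * (fps_X * Cf^2)" by (simp add: power_add algebra_simps power2_eq_square)
    also have "\<dots> = Cf^(k+1) - Cf^k" unfolding Cf_quad by (simp add: algebra_simps)
    finally have e: "fps_X * Cf^(k+2) = Cf^(k+1) - Cf^k" .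
    have "fps_nth (Cf^(k+2)) m = fps_nth (fps_X * Cf^(k+2)) (Suc m)" by simp
    also have "\<dots> = fps_nth (Cf^(k+1)) (m+1) - fps_nth (Cf^k) (m+1)" unfolding e by simp
    also have "\<dots> = complex_of_real (cc (k+1) (m+1) - cc k (m+1))"
      using less.IH[of "k+1"] less.IH[of k] 3 by simp
    also have "\<dots> = complex_of_real (cc (k+2) m)" by (simp only: cc_rec)
    finally show ?thesis using 3 by simp
  qed
qed

definition TT :: "nat \<Rightarrow> complex fps" where "TT j = fps_X^j * Cf^(2*j+2)"

lemma TT_nth: "fps_nth (TT j) n = (if j \<le> n then complex_of_real (cc (2*j+2) (n-j)) else 0)"
  unfolding TT_def fps_X_power_mult_nth Cf_pow_nth by auto

lemma TT_zero: "n < j \<Longrightarrow> fps_nth (TT j) n = 0"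
  by (simp add: TT_nth)

lemma catB_cc: "j \<le> n \<Longrightarrow> catB (n+1) (j+1) = cc (2*j+2) (n-j)"
proof -
  assume "j \<le> n"
  then have a: "2*(n-j)+(2*j+2) = 2*(n+1)" "n + 1 - (j + 1) = n - j" by simp_all
  have b: "real (2*j+2) / real (2*(n+1)) = real (j+1) / real (n+1)"
    by (simp add: field_simps)
  show ?thesis unfolding catB_def cc_def fr_def a b by simp
qed

lemma polyP_TT: "polyP n z = (\<Sum>j=0..n. z^j * fps_nth (TT j) n)"
  unfolding polyP_def TT_nth
proof (intro sum.cong refl)
  fix j assume "j \<in> {0..n}"
  hence j: "j \<le> n" by simp
  have "catB (n+1) (j+1) = cc (2*j+2) (n-j)" using j by (rule catB_cc)
  thus "complex_of_real (catB (n + 1) (j + 1)) * z ^ j =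
    z ^ j * (if j \<le> n then complex_of_real (cc (2 * j + 2) (n - j)) else 0)"
    using j by (simp add: mult.commute)
qed

lemma mult_lemma:
  fixes T :: "nat \<Rightarrow> complex fps"
  assumes "\<And>j n. n < j \<Longrightarrow> fps_nth (T j) n = 0"
  shows "fps_nth (A * Abs_fps (\<lambda>n. \<Sum>j=0..n. c j * fps_nth (T j) n)) n = (\<Sum>j=0..n. c j * fps_nth (A * T j) n)"
proof -
  have "fps_nth (A * Abs_fps (\<lambda>n. \<Sum>j=0..n. c j * fps_nth (T j) n)) n
      = (\<Sum>i=0..n. fps_nth A i * (\<Sum>j=0..n-i. c j * fps_nth (T j) (n-i)))"
    by (simp add: fps_mult_nth)
  also have "\<dots> = (\<Sum>i=0..n. fps_nth A i * (\<Sum>j=0..n. c j * fps_nth (T j) (n-i)))"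
  proof -
    have ext: "(\<Sum>j=0..n-i. c j * fps_nth (T j) (n-i)) = (\<Sum>j=0..n. c j * fps_nth (T j) (n-i))" for i
      by (rule sum.mono_neutral_left) (auto simp: assms)
    show ?thesis by (simp only: ext)
  qed
  also have "\<dots> = (\<Sum>i=0..n. \<Sum>j=0..n. c j * (fps_nth A i * fps_nth (T j) (n-i)))"
    by (simp add: sum_distrib_left algebra_simps)
  also have "\<dots> = (\<Sum>j=0..n. \<Sum>i=0..n. c j * (fps_nth A i * fps_nth (T j) (n-i)))"
    by (rule sum.swap)
  also have "\<dots> = (\<Sum>j=0..n. c j * fps_nth (A * T j) n)"
    by (simp add: fps_mult_nth sum_distrib_left)
  finally show ?thesis .
qed

definition Gd :: "complex \<Rightarrow> complex fps" where "Gd z = Abs_fps (\<lambda>n. polyP n z)"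
definition HH :: "complex \<Rightarrow> complex fps" where "HH z = 1 - fps_const z * (fps_X * Cf^2)"

lemma TT_Suc: "(fps_X * Cf^2) * TT j = TT (Suc j)"
  unfolding TT_def by (simp add: power_add algebra_simps power2_eq_square)

lemma Gd_HH: "Gd z * HH z = Cf^2"
proof (rule fps_ext)
  fix n
  have G: "Gd z = Abs_fps (\<lambda>n. \<Sum>j=0..n. z^j * fps_nth (TT j) n)"
    unfolding Gd_def polyP_TT ..
  define f where "f j = z^j * fps_nth (TT j) n" for j
  have m: "fps_nth ((fps_X * Cf^2) * Gd z) n = (\<Sum>j=0..n. z^j * fps_nth (TT (Suc j)) n)"
    unfolding G by (subst mult_lemma) (auto simp: TT_zero TT_Suc)
  have e: "Gd z * HH z = Gd z - fps_const z * ((fps_X * Cf^2) * Gd z)"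
    unfolding HH_def by (simp add: algebra_simps)
  have "fps_nth (Gd z * HH z) n = fps_nth (Gd z) n - z * fps_nth ((fps_X * Cf^2) * Gd z) n"
    by (simp only: e fps_sub_nth fps_mult_left_const_nth)
  also have "\<dots> = (\<Sum>j=0..n. f j) - (\<Sum>j=0..n. f (Suc j))"
    unfolding m by (simp add: G f_def sum_distrib_left algebra_simps)
  also have "\<dots> = (\<Sum>j\<le>n. f j - f (Suc j))"
    by (simp add: atLeast0AtMost sum_subtractf)
  also have "\<dots> = f 0 - f (Suc n)" by (rule sum_telescope)
  also have "\<dots> = fps_nth (Cf^2) n"
    by (simp add: f_def TT_zero) (simp add: TT_def power2_eq_square)
  finally show "fps_nth (Gd z * HH z) n = fps_nth (Cf^2) n" .
qed

lemma Gd_eq: "Gd z = Cf^2 * inverse (HH z)"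
proof -
  have h0: "fps_nth (HH z) 0 \<noteq> 0" by (simp add: HH_def)
  have "Gd z = Gd z * (HH z * inverse (HH z))"
    using inverse_mult_eq_1'[OF h0] by simp
  also have "\<dots> = Cf^2 * inverse (HH z)" by (simp add: Gd_HH mult.assoc[symmetric])
  finally show ?thesis .
qed

lemma aux_half: "(x::real)*(real N+1) = b \<Longrightarrow> y*(real N+1) = 2*(2*real N+1)*b \<Longrightarrow> x + y/2 = 2*b"
proof -
  assume h: "x*(real N+1) = b" "y*(real N+1) = 2*(2*real N+1)*b"
  have "(x + y/2)*(real N+1) = b + (2*real N+1)*b" using h by (simp add: algebra_simps)
  also have "\<dots> = (2*b)*(real N+1)" by (simp add: algebra_simps)
  finally have "(x + y/2)*(real N+1) = (2*b)*(real N+1)" .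
  moreover have "real N + 1 \<noteq> 0" by linarith
  ultimately show ?thesis by simp
qed

lemma cat_partial: "(\<Sum>n<N. real (catalan n) / 4^n) + 2 * real (2*N choose N) / 4^N = 2"
proof (induction N)
  case 0 then show ?case by simp
next
  case (Suc N)
  have x: "real (catalan N) * (real N+1) = real (2*N choose N)"
    unfolding catalan_real by (simp add: field_simps del: binomial_Suc_Suc)
  have y: "real (2*Suc N choose Suc N) * (real N+1) = 2*(2*real N+1)* real (2*N choose N)"
  proof -
    have "real ((2*N+2 choose Suc N) * (N+1)) = real (2*(2*N+1) * (2*N choose N))"
      by (simp only: central_rec)
    moreover have "2*Suc N = 2*N+2" by simp
    ultimately show ?thesis by (simp only: of_nat_mult of_nat_add of_nat_numeral of_nat_1)
  qed
  have k: "real (catalan N) + real (2*Suc N choose Suc N)/2 = 2*real (2*N choose N)"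
    by (rule aux_half[OF x y])
  have "real (catalan N) / 4^N + 2 * real (2*Suc N choose Suc N) / 4^(Suc N)
      = (real (catalan N) + real (2*Suc N choose Suc N)/2) / 4^N"
    by (simp add: field_simps)
  also have "\<dots> = 2*real (2*N choose N) / 4^N" unfolding k ..
  finally have e: "real (catalan N) / 4^N + 2 * real (2*Suc N choose Suc N) / 4^(Suc N) = 2*real (2*N choose N) / 4^N" .
  have "(\<Sum>n<Suc N. real (catalan n) / 4^n) + 2 * real (2*Suc N choose Suc N) / 4^(Suc N)
     = (\<Sum>n<N. real (catalan n) / 4^n) + (real (catalan N) / 4^N + 2 * real (2*Suc N choose Suc N) / 4^(Suc N))"
    by simp
  also have "\<dots> = 2" unfolding e using Suc.IH by simp
  finally show ?case .
qed

lemma cat_partial_le: "(\<Sum>n<N. real (catalan n) / 4^n) \<le> 2"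
  using cat_partial[of N] by (smt (verit) divide_nonneg_nonneg of_nat_0_le_iff zero_le_power)

lemma catalan_le: "catalan n \<le> 4^n"
proof -
  have "catalan n \<le> 2*n choose n" unfolding catalan_def by (rule div_le_dividend)
  also have "\<dots> \<le> 2^(2*n)" by (rule binomial_le_pow2)
  also have "\<dots> = 4^n" by (simp add: power_mult)
  finally show ?thesis .
qed

lemma Cf_radius: "fps_conv_radius Cf \<ge> ereal (1/4)"
  unfolding fps_conv_radius_def
proof (rule conv_radius_geI_ex')
  fix r :: real assume r: "0 < r" "ereal r < ereal (1/4)"
  hence r4: "4*r < 1" by simp
  have g: "summable (\<lambda>n. (4*r)^n)" using r r4 by (intro summable_geometric) simp
  show "summable (\<lambda>n. fps_nth Cf n * of_real r ^ n)"
  proof (rule summable_comparison_test'[OF g])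
    fix n :: nat
    have "norm (fps_nth Cf n * of_real r ^ n) = real (catalan n) * r^n"
      using r by (simp add: Cf_def norm_mult norm_power)
    also have "\<dots> \<le> 4^n * r^n"
      using catalan_le[of n] r by (intro mult_right_mono) (simp_all add: of_nat_le_iff[symmetric])
    also have "\<dots> = (4*r)^n" by (simp add: power_mult_distrib)
    finally show "norm (fps_nth Cf n * of_real r ^ n) \<le> (4*r)^n" .
  qed
qed

lemma catalan_gf_eval: "catalan_gf w = eval_fps Cf w"
  unfolding catalan_gf_def eval_fps_def Cf_def by simp

lemma in_rad: "norm w < 1/4 \<Longrightarrow> ereal (norm w) < fps_conv_radius Cf"
proof -
  assume h: "norm w < 1/4"
  have "ereal (norm w) < ereal (1/4)" using h by simp
  thus ?thesis using Cf_radius by (rule less_le_trans)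
qed

lemma C_bound: assumes "norm w < 1/4" shows "norm (catalan_gf w) \<le> 2"
proof -
  have s: "summable (\<lambda>n. norm (fps_nth Cf n * w ^ n))"
    by (rule norm_summable_fps) (rule in_rad[OF assms])
  have "norm (catalan_gf w) \<le> (\<Sum>n. norm (fps_nth Cf n * w ^ n))"
    unfolding catalan_gf_eval eval_fps_def by (rule summable_norm[OF s])
  also have "\<dots> \<le> 2"
  proof (rule suminf_le_const[OF s])
    fix N
    have "(\<Sum>n<N. norm (fps_nth Cf n * w ^ n)) \<le> (\<Sum>n<N. real (catalan n) / 4^n)"
    proof (rule sum_mono)
      fix n
      have "norm w ^ n \<le> (1/4)^n" using assms by (intro power_mono) simp_all
      hence "real (catalan n) * norm w ^ n \<le> real (catalan n) * (1/4)^n"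
        by (intro mult_left_mono) simp_all
      thus "norm (fps_nth Cf n * w ^ n) \<le> real (catalan n) / 4^n"
        by (simp add: Cf_def norm_mult norm_power power_divide)
    qed
    also have "\<dots> \<le> 2" by (rule cat_partial_le)
    finally show "(\<Sum>n<N. norm (fps_nth Cf n * w ^ n)) \<le> 2" .
  qed
  finally show ?thesis .
qed

lemma C_quad: assumes "norm w < 1/4" shows "w * (catalan_gf w)^2 = catalan_gf w - 1"
proof -
  have r: "ereal (norm w) < fps_conv_radius Cf" by (rule in_rad[OF assms])
  have r2: "ereal (norm w) < fps_conv_radius (Cf^2)"
    using r fps_conv_radius_power[of Cf 2] by (meson less_le_trans)
  have "eval_fps (fps_X * Cf^2) w = eval_fps (Cf - 1) w" by (simp only: Cf_quad)
  moreover have "eval_fps (fps_X * Cf^2) w = w * (eval_fps Cf w)^2"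
    using r r2 by (simp add: eval_fps_mult eval_fps_power)
  moreover have "eval_fps (Cf - 1) w = eval_fps Cf w - 1"
    using r by (simp add: eval_fps_diff)
  ultimately show ?thesis unfolding catalan_gf_eval by simp
qed

lemma rad_XC2: "fps_conv_radius (fps_X * Cf^2) \<ge> ereal (1/4)"
proof -
  have "ereal (1/4) \<le> fps_conv_radius (Cf^2)"
    using Cf_radius fps_conv_radius_power[of Cf 2] by (rule order_trans)
  also have "\<dots> = min (fps_conv_radius (fps_X :: complex fps)) (fps_conv_radius (Cf^2))" by simp
  also have "\<dots> \<le> fps_conv_radius (fps_X * Cf^2)" by (rule fps_conv_radius_mult)
  finally show ?thesis .
qed

lemma rad_zXC2: "fps_conv_radius (fps_const z * (fps_X * Cf^2)) \<ge> ereal (1/4)"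
proof -
  have "ereal (1/4) \<le> min (fps_conv_radius (fps_const z)) (fps_conv_radius (fps_X * Cf^2))"
    using rad_XC2 by simp
  also have "\<dots> \<le> fps_conv_radius (fps_const z * (fps_X * Cf^2))" by (rule fps_conv_radius_mult)
  finally show ?thesis .
qed

lemma HH_radius: "fps_conv_radius (HH z) \<ge> ereal (1/4)"
proof -
  have "ereal (1/4) \<le> min (fps_conv_radius (1::complex fps)) (fps_conv_radius (fps_const z * (fps_X * Cf^2)))"
    using rad_zXC2 by simp
  also have "\<dots> \<le> fps_conv_radius (HH z)" unfolding HH_def by (rule fps_conv_radius_diff)
  finally show ?thesis .
qed

lemma lt_quarter: "norm w < 1/4 \<Longrightarrow> R \<ge> ereal (1/4) \<Longrightarrow> ereal (norm w) < R"
proof -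
  assume h: "norm w < 1/4" "R \<ge> ereal (1/4)"
  have "ereal (norm w) < ereal (1/4)" using h by simp
  thus ?thesis using h(2) by (rule less_le_trans)
qed

lemma HH_eval: assumes "norm w < 1/4"
  shows "eval_fps (HH z) w = 1 - z * (w * (catalan_gf w)^2)"
proof -
  have r: "ereal (norm w) < fps_conv_radius Cf" by (rule in_rad[OF assms])
  have r2: "ereal (norm w) < fps_conv_radius (Cf^2)"
    using r fps_conv_radius_power[of Cf 2] by (meson less_le_trans)
  have r3: "ereal (norm w) < fps_conv_radius (fps_X * Cf^2)" by (rule lt_quarter[OF assms rad_XC2])
  have r4: "ereal (norm w) < fps_conv_radius (fps_const z * (fps_X * Cf^2))" by (rule lt_quarter[OF assms rad_zXC2])
  have "eval_fps (HH z) w = 1 - eval_fps (fps_const z * (fps_X * Cf^2)) w"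
    unfolding HH_def using r4 by (subst eval_fps_diff) simp_all
  also have "eval_fps (fps_const z * (fps_X * Cf^2)) w = z * eval_fps (fps_X * Cf^2) w"
    using r3 by (subst eval_fps_mult) simp_all
  also have "eval_fps (fps_X * Cf^2) w = w * eval_fps (Cf^2) w"
    using r2 by (subst eval_fps_mult) simp_all
  also have "eval_fps (Cf^2) w = (eval_fps Cf w)^2"
    using r by (rule eval_fps_power)
  finally show ?thesis unfolding catalan_gf_eval .
qed

lemma HH_nz: assumes "norm z < 1" "norm w < 1/4"
  shows "1 - z * (w * (catalan_gf w)^2) \<noteq> 0"
proof
  assume eq: "1 - z * (w * (catalan_gf w)^2) = 0"
  have "norm (catalan_gf w)^2 \<le> 2^2" using C_bound[OF assms(2)] by (intro power_mono) simp_all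
  hence "norm w * norm (catalan_gf w)^2 \<le> (1/4) * 4"
    using assms(2) by (intro mult_mono) simp_all
  hence "norm (w * (catalan_gf w)^2) \<le> 1" by (simp add: norm_mult norm_power)
  hence "norm z * norm (w * (catalan_gf w)^2) \<le> norm z"
    by (intro mult_left_le) simp_all
  hence "norm z * norm (w * (catalan_gf w)^2) < 1"
    using assms(1) by linarith
  hence "norm (z * (w * (catalan_gf w)^2)) < 1" by (simp add: norm_mult)
  moreover have "z * (w * (catalan_gf w)^2) = 1" using eq by simp
  ultimately show False by simp
qed

lemma Gd_sums: assumes "norm z < 1" "norm w < 1/4"
  shows "(\<lambda>n. polyP n z * w^n) sums ((catalan_gf w)^2 / (1 - z * (w * (catalan_gf w)^2)))"
proof -
  have nz: "\<And>u. ereal (norm u) < ereal (1/4) \<Longrightarrow> eval_fps (HH z) u \<noteq> 0"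
  proof -
    fix u :: complex assume "ereal (norm u) < ereal (1/4)"
    hence u: "norm u < 1/4" by simp
    show "eval_fps (HH z) u \<noteq> 0" unfolding HH_eval[OF u] by (rule HH_nz[OF assms(1) u])
  qed
  have ri: "fps_conv_radius (inverse (HH z)) \<ge> ereal (1/4)"
  proof -
    have "ereal (1/4) \<le> min (ereal (1/4)) (fps_conv_radius (HH z))" using HH_radius by simp
    also have "\<dots> \<le> fps_conv_radius (inverse (HH z))"
      by (rule fps_conv_radius_inverse[of "ereal (1/4)" "HH z", OF nz])
    finally show ?thesis .
  qed
  have rc2: "fps_conv_radius (Cf^2) \<ge> ereal (1/4)"
    using Cf_radius fps_conv_radius_power[of Cf 2] by (rule order_trans)
  have rg: "fps_conv_radius (Gd z) \<ge> ereal (1/4)"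
  proof -
    have "ereal (1/4) \<le> min (fps_conv_radius (Cf^2)) (fps_conv_radius (inverse (HH z)))"
      using ri rc2 by simp
    also have "\<dots> \<le> fps_conv_radius (Gd z)" unfolding Gd_eq by (rule fps_conv_radius_mult)
    finally show ?thesis .
  qed
  have ev: "eval_fps (Gd z) w = (catalan_gf w)^2 / (1 - z * (w * (catalan_gf w)^2))"
  proof -
    have "eval_fps (Gd z) w = eval_fps (Cf^2) w * eval_fps (inverse (HH z)) w"
      unfolding Gd_eq using lt_quarter[OF assms(2) rc2] lt_quarter[OF assms(2) ri]
      by (rule eval_fps_mult)
    also have "eval_fps (inverse (HH z)) w = inverse (eval_fps (HH z) w)"
      by (rule eval_fps_inverse[of "ereal (1/4)" "HH z", OF nz])
         (use lt_quarter[OF assms(2) HH_radius] assms(2) in simp_all)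
    also have "eval_fps (Cf^2) w = (eval_fps Cf w)^2"
      using in_rad[OF assms(2)] by (rule eval_fps_power)
    finally show ?thesis unfolding HH_eval[OF assms(2)] catalan_gf_eval by (simp add: divide_inverse)
  qed
  have "(\<lambda>n. fps_nth (Gd z) n * w^n) sums eval_fps (Gd z) w"
    by (rule sums_eval_fps) (rule lt_quarter[OF assms(2) rg])
  thus ?thesis unfolding ev by (simp add: Gd_def)
qed

lemma final_alg:
  fixes C w z :: complex
  assumes h: "w * C^2 = C - 1" and d1: "1 - z * (w * C^2) \<noteq> 0" and d2: "w * (1 + z)^2 - z \<noteq> 0"
  shows "C^2 / (1 - z * (w * C^2)) = (C - (z + 1)) / (w * (1 + z)^2 - z)"
proof -
  have e1: "C^2 * (w * (1 + z)^2 - z) = (w * C^2) * (1+z)^2 - z * C^2" by (simp add: algebra_simps)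
  have e2: "C^2 * (w * (1 + z)^2 - z) = (C - (z + 1)) * (1 - z * (w * C^2))"
    unfolding e1 h by (simp add: algebra_simps power2_eq_square)
  show ?thesis using e2 d1 d2 by (simp add: frac_eq_eq)
qed

lemma qa_aux:
  fixes c c1 c2 j k M :: real
  assumes "c1*(k+1) = (M+1)*c" "c2*(k+1) = c*(2*j+k+2)" "M = 2*j+2*k+2" "j \<ge> 0" "k \<ge> 0"
  shows "(2*j+1)/(M+1)*c1 = (j+1)/(j+k+1)*c + j/(j+k+1)*c2"
proof -
  have k1: "k+1 \<noteq> 0" using assms by linarith
  have M1: "M+1 \<noteq> 0" using assms by linarith
  have jk: "j+k+1 \<noteq> 0" using assms by linarith
  have e1: "c1 = (M+1)*c/(k+1)" using assms(1) k1 by (simp add: field_simps)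
  have e2: "c2 = c*(2*j+k+2)/(k+1)" using assms(2) k1 by (simp add: field_simps)
  have t1: "(2*j+1)/(M+1)*c1 = (2*j+1)*c/(k+1)" unfolding e1 using M1 by simp
  have t2: "(j+1)/(j+k+1)*c = ((j+1)*(k+1)*c)/((j+k+1)*(k+1))" using k1 by simp
  have t3: "j/(j+k+1)*c2 = (j*c*(2*j+k+2))/((j+k+1)*(k+1))" unfolding e2 by simp
  have t4: "((j+1)*(k+1)*c)/((j+k+1)*(k+1)) + (j*c*(2*j+k+2))/((j+k+1)*(k+1))
      = ((j+1)*(k+1)*c + j*c*(2*j+k+2))/((j+k+1)*(k+1))" by (rule add_divide_distrib[symmetric])
  have t5: "(j+1)*(k+1)*c + j*c*(2*j+k+2) = (2*j+1)*c*(j+k+1)" by (simp add: algebra_simps)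
  show ?thesis unfolding t1 t2 t3 t4 t5 using jk by simp
qed

lemma catA_split: assumes "j \<le> n"
  shows "catA (n+1) (j+1) = catB (n+1) (j+1) + catB (n+1) j"
proof -
  obtain k where n: "n = j + k" using assms le_Suc_ex by blast
  define M where "M = 2*j+2*k+2"
  have a1: "2*(n+1)+1 = M+1" "n+1+1-(j+1) = k+1" "2*(n+1) = M" "n+1-(j+1) = k" "n+1-j = k+1"
    unfolding M_def n by simp_all
  have h1: "(M+1 choose (k+1)) * (k+1) = (M+1) * (M choose k)"
    using Suc_times_binomial_eq[of M k] by simp
  have h2: "(M choose (k+1)) * (k+1) = (M choose k) * (2*j+k+2)"
    using binom_step[of M k] unfolding M_def by simp
  have h1r: "real (M+1 choose (k+1)) * (real k+1) = (real M+1) * real (M choose k)"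
    using arg_cong[OF h1, of real] by (simp add: algebra_simps del: binomial_Suc_Suc)
  have h2r: "real (M choose (k+1)) * (real k+1) = real (M choose k) * (2*real j+real k+2)"
    using arg_cong[OF h2, of real] by (simp add: algebra_simps del: binomial_Suc_Suc)
  have X: "(2*real j+1)/(real M+1)*real (M+1 choose (k+1)) = (real j+1)/(real j+real k+1)*real (M choose k) + real j/(real j+real k+1)*real (M choose (k+1))"
    by (rule qa_aux[OF h1r h2r]) (simp_all add: M_def)
  have b1: "2 * real (j+1) - 1 = 2*real j+1" by simp
  have b2: "real (n+1) = real j+real k+1" unfolding n by simp
  have M_real: "real M = 2*real j + 2*real k + 2" unfolding M_def by simp
  show ?thesis unfolding catA_def catB_def a1 b1 b2 using X by (simp add: add.commute M_real del: binomial_Suc_Suc)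
qed

lemma catA_last: "catA (n+1) (n+2) = catB (n+1) (n+1)"
  by (simp add: catA_def catB_def)

lemma catB_0: "catB m 0 = 0" by (simp add: catB_def)

lemma polyQ_eq: "polyQ n z = (1+z) * polyP n z"
proof -
  define b where "b k = complex_of_real (catB (n+1) k)" for k
  have P: "polyP n z = (\<Sum>j=0..n. b (j+1) * z^j)" unfolding polyP_def b_def ..
  have s2a: "(\<Sum>j=0..Suc n. b j * z^j) = b 0 * z^0 + (\<Sum>j=0..n. b (Suc j) * z^(Suc j))"
    unfolding sum.atLeast0_atMost_Suc_shift comp_def ..
  have b0: "b 0 = 0" by (simp add: b_def catB_0)
  have s2: "(\<Sum>j=0..n. b (j+1) * z^(j+1)) = (\<Sum>j=0..n+1. b j * z^j)"
    using s2a b0 by simp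
  have s1: "(\<Sum>j=0..n. b (j+1) * z^j) = (\<Sum>j=0..n+1. (if j \<le> n then b (j+1) else 0) * z^j)"
    by (simp add: sum.atLeast0_atMost_Suc)
  have Q: "polyQ n z = (\<Sum>j=0..n+1. ((if j \<le> n then b (j+1) else 0) + b j) * z^j)"
    unfolding polyQ_def
  proof (intro sum.cong refl)
    fix j assume "j \<in> {0..n+1}"
    hence j: "j \<le> n+1" by simp
    show "complex_of_real (catA (n+1) (j+1)) * z^j = ((if j \<le> n then b (j+1) else 0) + b j) * z^j"
    proof (cases "j \<le> n")
      case True
      then show ?thesis using catA_split[OF True] by (simp add: b_def)
    next
      case False
      hence "j = n+1" using j by simp
      then show ?thesis using catA_last[of n] by (simp add: b_def)
    qed
  qed
  have "(1+z) * polyP n z = (\<Sum>j=0..n. b (j+1) * z^j) + (\<Sum>j=0..n. b (j+1) * z^(j+1))"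
    unfolding P by (simp add: algebra_simps sum_distrib_left sum.distrib)
  also have "\<dots> = polyQ n z"
    unfolding s1 s2 Q by (simp add: sum.distrib algebra_simps)
  finally show ?thesis by simp
qed

theorem theorem2p7:
  fixes z w :: complex
  assumes "norm z < 1" and "norm w < 1/4" and "w * (1 + z)^2 \<noteq> z"
  shows "(\<lambda>n. polyP n z * w ^ n) sums
           ((catalan_gf w - (z + 1)) / (w * (1 + z)^2 - z)) \<and>
         (\<lambda>n. polyQ n z * w ^ n) sums
           ((catalan_gf w - (z + 1)) * (z + 1) / (w * (1 + z)^2 - z)) \<and>
         (\<Sum>n. polyQ n z * w ^ n) = (\<Sum>n. polyP n z * w ^ n) * (z + 1)"
proof -
  let ?C = "catalan_gf w"
  have eq: "?C^2 / (1 - z * (w * ?C^2)) = (?C - (z + 1)) / (w * (1 + z)^2 - z)"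
    by (rule final_alg[OF C_quad[OF assms(2)] HH_nz[OF assms(1,2)]]) (use assms(3) in simp)
  have P: "(\<lambda>n. polyP n z * w ^ n) sums ((?C - (z + 1)) / (w * (1 + z)^2 - z))"
    using Gd_sums[OF assms(1,2)] unfolding eq .
  have Q0: "(\<lambda>n. (1+z) * (polyP n z * w ^ n)) sums ((1+z) * ((?C - (z + 1)) / (w * (1 + z)^2 - z)))"
    by (rule sums_mult[OF P])
  have fe: "(\<lambda>n. polyQ n z * w ^ n) = (\<lambda>n. (1+z) * (polyP n z * w ^ n))"
    by (simp add: polyQ_eq mult.assoc)
  have ve: "(1+z) * ((?C - (z + 1)) / (w * (1 + z)^2 - z)) = (?C - (z + 1)) * (z + 1) / (w * (1 + z)^2 - z)"
    by (simp add: algebra_simps)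
  have Q: "(\<lambda>n. polyQ n z * w ^ n) sums ((?C - (z + 1)) * (z + 1) / (w * (1 + z)^2 - z))"
    using Q0 unfolding fe ve .
  have "(\<Sum>n. polyQ n z * w ^ n) = (?C - (z + 1)) * (z + 1) / (w * (1 + z)^2 - z)"
    using Q by (rule sums_unique[symmetric])
  also have "\<dots> = ((?C - (z + 1)) / (w * (1 + z)^2 - z)) * (z + 1)" by simp
  also have "\<dots> = (\<Sum>n. polyP n z * w ^ n) * (z + 1)"
    using P by (simp add: sums_unique[symmetric])
  finally show ?thesis using P Q by simp
qed

end
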